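(* Let $T:\mathbb{Z}\to\mathbb{Z}$ be defined by $T(n)=n/2$ if $n$ is even and $T(n)=(3n+1)/2$ if $n$ is odd. For every nonzero integer $n$, the $T$-trajectory $(T^k(n))_{k\ge 0}$ has the following structure: there is $K\ge 0$ such that $T^k(n)\equiv 0\pmod 3$ for $0\le k<K$, and for $k\ge K$ every term $T^k(n)$ is congruent to $2$ or $8\pmod 9$ except for isolated terms (no two in succession) that are congruent to $1\pmod 3$ and isolated terms (no two in succession) that are congruent to $5\pmod 9$; that is, for all $k\ge K$, $T^k(n)\not\equiv 0\pmod 3$, it is not the case that $T^k(n)\equiv T^{k+1}(n)\equiv 1\pmod 3$, and it is not the case that $T^k(n)\equiv T^{k+1}(n)\equiv 5\pmod 9$.
   Context: $T^0(n)=n$, $T^{k+1}(n)=T(T^k(n))$. *)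

theory Defs
  imports Main
begin

definition T :: "int \<Rightarrow> int" where
  "T n = (if even n then n div 2 else (3 * n + 1) div 2)"

end

theory Submission
  imports Defs
begin

lemma L1: "n mod 3 \<noteq> 0 \<Longrightarrow> T n mod 3 \<noteq> (0::int)"
  unfolding T_def by (cases "even n") (auto elim!: evenE oddE, presburger+)

lemma L2: "n mod 3 = 1 \<Longrightarrow> T n mod 3 \<noteq> (1::int)"
  unfolding T_def by (cases "even n") (auto elim!: evenE oddE, presburger+)

lemma L3: "n mod 9 = 5 \<Longrightarrow> T n mod 9 \<noteq> (5::int)"
  unfolding T_def by (cases "even n") (auto elim!: evenE oddE, presburger+)

lemma L4: "odd n \<Longrightarrow> T n mod 3 \<noteq> (0::int)"
  unfolding T_def by (auto elim!: oddE, presburger+)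

lemma ex_nz: "n \<noteq> 0 \<Longrightarrow> \<exists>k. (T ^^ k) n mod 3 \<noteq> 0"
proof (induction "nat \<bar>n\<bar>" arbitrary: n rule: less_induct)
  case less
  show ?case
  proof (cases "n mod 3 = 0")
    case False
    then show ?thesis by (intro exI[of _ 0]) simp
  next
    case True
    show ?thesis
    proof (cases "even n")
      case False
      then show ?thesis using L4 by (intro exI[of _ 1]) simp
    next
      case True
      have t: "T n = n div 2" using True unfolding T_def by simp
      have "n div 2 \<noteq> 0" "nat \<bar>n div 2\<bar> < nat \<bar>n\<bar>" using True less.prems by (auto elim!: evenE)
      then obtain k where "(T ^^ k) (n div 2) mod 3 \<noteq> 0" using less.hyps by blast
      then have "(T ^^ Suc k) n mod 3 \<noteq> 0" by (simp add: funpow_Suc_right t del: funpow.simps)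
      then show ?thesis by blast
    qed
  qed
qed

theorem theorem4:
  fixes n :: int
  assumes "n \<noteq> 0"
  shows "\<exists>K::nat.
           (\<forall>k<K. (T ^^ k) n mod 3 = 0) \<and>
           (\<forall>k\<ge>K. (T ^^ k) n mod 3 \<noteq> 0
               \<and> \<not> ((T ^^ k) n mod 3 = 1 \<and> (T ^^ Suc k) n mod 3 = 1)
               \<and> \<not> ((T ^^ k) n mod 9 = 5 \<and> (T ^^ Suc k) n mod 9 = 5))"
proof -
  define K where "K = (LEAST k. (T ^^ k) n mod 3 \<noteq> 0)"
  have K1: "(T ^^ K) n mod 3 \<noteq> 0" unfolding K_def using ex_nz[OF assms] by (rule LeastI_ex)
  have K2: "\<forall>k<K. (T ^^ k) n mod 3 = 0" unfolding K_def using not_less_Least by blast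
  have K3: "(T ^^ k) n mod 3 \<noteq> 0" if "k \<ge> K" for k
    using that
  proof (induction k rule: dec_induct)
    case base then show ?case by (rule K1)
  next
    case (step m) then show ?case using L1 by simp
  qed
  show ?thesis
    using K2 K3 L2 L3 by (intro exI[of _ K]) auto
qed

end
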